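(* Let $d\ge2$, $s\ge 1$, $\{r_n\}\subset(0,+\infty)$ with $r_n\to 0^+$, and let $\{E_n\}$ be measurable sets of finite measure such that $\chi_{E_n}\to\chi_E$ in $L^1(\mathbb{R}^d)$ for some measurable set $E$ of finite measure. If $\limsup_{n\to\infty}\frac{\tilde J^s_{r_n}(E_n)}{\sigma^s(r_n)}\le M$ for some $M<+\infty$, then $E$ has finite perimeter.
   Context: $k^s_r(t)=r^{-d-s}$ for $0\le t\le r$ and $k^s_r(t)=t^{-d-s}$ for $t>r$; $\tilde J_r^s(E):=\int_E\int_{\mathbb{R}^d\setminus E}k^s_r(|x-y|)\,dy\,dx$. $\sigma^s(r):=|\log r|$ if $s=1$ and $\sigma^s(r):=\frac{d+s}{d+1}\frac{r^{1-s}}{s-1}$ if $s>1$. *)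

theory Defs
  imports "HOL-Analysis.Analysis"
begin

definition kernel_k :: "nat \<Rightarrow> real \<Rightarrow> real \<Rightarrow> real \<Rightarrow> real" where
  "kernel_k d s r t = (if t \<le> r then r powr (-(real d + s)) else t powr (-(real d + s)))"

definition Jtilde :: "real \<Rightarrow> real \<Rightarrow> ('a::euclidean_space) set \<Rightarrow> ennreal" where
  "Jtilde s r E = (\<integral>\<^sup>+ x. (\<integral>\<^sup>+ y. ennreal (kernel_k DIM('a) s r (dist x y))
       * indicator (UNIV - E) y \<partial>lebesgue) * indicator E x \<partial>lebesgue)"

definition sigma_s :: "nat \<Rightarrow> real \<Rightarrow> real \<Rightarrow> real" where
  "sigma_s d s r = (if s = 1 then \<bar>ln r\<bar>
                    else (real d + s) / (real d + 1) * r powr (1 - s) / (s - 1))"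

definition test_fields :: "('a::euclidean_space \<Rightarrow> 'a) set" where
  "test_fields = {\<phi>. (\<exists>D :: 'a \<Rightarrow> ('a \<Rightarrow>\<^sub>L 'a). continuous_on UNIV D \<and>
                        (\<forall>x. (\<phi> has_derivative blinfun_apply (D x)) (at x)))
                    \<and> compact (closure {x. \<phi> x \<noteq> 0})
                    \<and> (\<forall>x. norm (\<phi> x) \<le> 1)}"

definition divergence :: "('a::euclidean_space \<Rightarrow> 'a) \<Rightarrow> 'a \<Rightarrow> real" where
  "divergence \<phi> x = (\<Sum>b\<in>Basis. frechet_derivative \<phi> (at x) b \<bullet> b)"

definition perimeter :: "('a::euclidean_space) set \<Rightarrow> ereal" where
  "perimeter E = (SUP \<phi>\<in>test_fields. ereal (LINT x:E|lebesgue. divergence \<phi> x))"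

definition finite_perimeter :: "('a::euclidean_space) set \<Rightarrow> bool" where
  "finite_perimeter E \<longleftrightarrow> perimeter E < \<infinity>"

end

theory Submission
  imports Defs
begin

lemma nn_transl:
  fixes f :: "'a::euclidean_space \<Rightarrow> ennreal"
  assumes [measurable]: "f \<in> borel_measurable borel"
  shows "(\<integral>\<^sup>+x. f (x + c) \<partial>lborel) = (\<integral>\<^sup>+x. f x \<partial>lborel)"
proof -
  have "(\<integral>\<^sup>+x. f x \<partial>lborel) = (\<integral>\<^sup>+x. f x \<partial>(distr lborel borel ((+) c)))"
    by (simp add: lborel_distr_plus)
  also have "\<dots> = (\<integral>\<^sup>+x. f (c + x) \<partial>lborel)"
    by (subst nn_integral_distr) auto
  finally show ?thesis by (simp add: add.commute)
qed

lemma nn_refl: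
  fixes f :: "'a::euclidean_space \<Rightarrow> ennreal"
  assumes [measurable]: "f \<in> borel_measurable borel"
  shows "(\<integral>\<^sup>+x. f (c - x) \<partial>lborel) = (\<integral>\<^sup>+x. f x \<partial>lborel)"
proof -
  have "(\<integral>\<^sup>+x. f x \<partial>lborel) = (\<integral>\<^sup>+x. f x \<partial>(density (distr lborel borel (\<lambda>x. c + (-1) *\<^sub>R x)) (\<lambda>_. \<bar>-1::real\<bar>^DIM('a))))"
    by (subst lborel_affine[of "-1" c, symmetric]) auto
  also have "\<dots> = (\<integral>\<^sup>+x. f x \<partial>(distr lborel borel (\<lambda>x. c + (-1) *\<^sub>R x)))"
    by (simp add: density_1)
  also have "\<dots> = (\<integral>\<^sup>+x. f (c - x) \<partial>lborel)"
    by (subst nn_integral_distr) auto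
  finally show ?thesis by simp
qed

lemma int_transl:
  fixes f :: "'a::euclidean_space \<Rightarrow> real"
  assumes [measurable]: "f \<in> borel_measurable borel"
  shows "(\<integral>x. f (x + c) \<partial>lborel) = (\<integral>x. f x \<partial>lborel)"
proof -
  have "(\<integral>x. f x \<partial>lborel) = (\<integral>x. f x \<partial>(distr lborel borel ((+) c)))"
    by (simp add: lborel_distr_plus)
  also have "\<dots> = (\<integral>x. f (c + x) \<partial>lborel)"
    by (subst integral_distr) auto
  finally show ?thesis by (simp add: add.commute)
qed

definition gg :: "'a::euclidean_space set \<Rightarrow> 'a \<Rightarrow> ennreal" where
  "gg F h = (\<integral>\<^sup>+x. indicator F x * indicator (UNIV - F) (x + h) \<partial>lborel)"

lemma gg_sub:
  assumes [measurable]: "F \<in> sets borel"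
  shows "gg F (a + b) \<le> gg F a + gg F b"
proof -
  have "gg F (a + b) \<le> (\<integral>\<^sup>+x. indicator F x * indicator (UNIV - F) (x + a)
          + indicator F (x + a) * indicator (UNIV - F) (x + a + b) \<partial>lborel)"
    unfolding gg_def by (intro nn_integral_mono) (auto simp: indicator_def add.assoc)
  also have "\<dots> = gg F a + (\<integral>\<^sup>+x. indicator F (x + a) * indicator (UNIV - F) (x + a + b) \<partial>lborel)"
    unfolding gg_def by (subst nn_integral_add) auto
  also have "(\<integral>\<^sup>+x. indicator F (x + a) * indicator (UNIV - F) (x + a + b) \<partial>lborel) = gg F b"
    unfolding gg_def using nn_transl[of "\<lambda>x. indicator F x * indicator (UNIV - F) (x + b)" a]
    by (simp add: add.assoc add.commute[of a b])
  finally show ?thesis .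
qed

lemma gg_0: "gg (F::'a::euclidean_space set) 0 = 0"
proof -
  have "(\<lambda>x. indicator F x * indicator (UNIV - F) (x + 0) :: ennreal) = (\<lambda>x. 0)"
    by (auto simp: indicator_def fun_eq_iff)
  then show ?thesis unfolding gg_def by simp
qed

lemma gg_mult:
  assumes [measurable]: "F \<in> sets borel"
  shows "gg F (real m *\<^sub>R h) \<le> of_nat m * gg F h"
proof (induction m)
  case 0
  then show ?case by (simp add: gg_0)
next
  case (Suc m)
  have "gg F (real (Suc m) *\<^sub>R h) = gg F (real m *\<^sub>R h + h)"
    by (simp add: algebra_simps)
  also have "\<dots> \<le> gg F (real m *\<^sub>R h) + gg F h" by (rule gg_sub) fact
  also have "\<dots> \<le> of_nat m * gg F h + gg F h" using Suc by (intro add_right_mono)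
  finally show ?case by (simp add: algebra_simps)
qed

lemma gg_meas[measurable]:
  assumes [measurable]: "F \<in> sets borel"
  shows "gg F \<in> borel_measurable borel"
  unfolding gg_def by measurable

lemma kernel_meas[measurable]: "kernel_k d s r \<in> borel_measurable borel"
  unfolding kernel_k_def by measurable

lemma J_eq:
  fixes F :: "'a::euclidean_space set"
  assumes [measurable]: "F \<in> sets borel"
  shows "Jtilde s r F = (\<integral>\<^sup>+h. ennreal (kernel_k DIM('a) s r (norm h)) * gg F h \<partial>lborel)"
proof -
  let ?K = "\<lambda>h::'a. ennreal (kernel_k DIM('a) s r (norm h))"
  have inner: "(\<integral>\<^sup>+ y. ennreal (kernel_k DIM('a) s r (dist x y)) * indicator (UNIV - F) y \<partial>lborel)
     = (\<integral>\<^sup>+ h. ?K h * indicator (UNIV - F) (x + h) \<partial>lborel)" for x :: 'a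
  proof -
    have "(\<integral>\<^sup>+ y. ennreal (kernel_k DIM('a) s r (dist x y)) * indicator (UNIV - F) y \<partial>lborel)
       = (\<integral>\<^sup>+ h. ennreal (kernel_k DIM('a) s r (dist x (h + x))) * indicator (UNIV - F) (h + x) \<partial>lborel)"
      by (rule nn_transl[symmetric]) measurable
    also have "\<dots> = (\<integral>\<^sup>+ h. ?K h * indicator (UNIV - F) (x + h) \<partial>lborel)"
      by (simp add: dist_norm add.commute)
    finally show ?thesis .
  qed
  have "Jtilde s r F = (\<integral>\<^sup>+x. (\<integral>\<^sup>+h. ?K h * indicator (UNIV - F) (x + h) \<partial>lborel) * indicator F x \<partial>lborel)"
    unfolding Jtilde_def nn_integral_completion inner ..
  also have "\<dots> = (\<integral>\<^sup>+x. (\<integral>\<^sup>+h. ?K h * indicator (UNIV - F) (x + h) * indicator F x \<partial>lborel) \<partial>lborel)"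
    by (subst nn_integral_multc) auto
  also have "\<dots> = (\<integral>\<^sup>+h. (\<integral>\<^sup>+x. ?K h * indicator (UNIV - F) (x + h) * indicator F x \<partial>lborel) \<partial>lborel)"
    by (rule lborel_pair.Fubini'[symmetric]) measurable
  also have "\<dots> = (\<integral>\<^sup>+h. ?K h * gg F h \<partial>lborel)"
    unfolding gg_def
    by (subst nn_integral_cmult[symmetric]) (auto simp: mult.commute mult.left_commute intro!: nn_integral_cong)
  finally show ?thesis .
qed

lemma ball_borel[measurable]: "ball (p::'a::euclidean_space) r \<in> sets borel"
  by (simp add: borel_open)

lemma gg_ball:
  fixes F :: "'a::euclidean_space set"
  assumes [measurable]: "F \<in> sets borel"
  shows "emeasure lborel (ball p \<rho>) * gg F y \<le>
     (\<integral>\<^sup>+h. indicator (ball p \<rho>) h * gg F h \<partial>lborel) + (\<integral>\<^sup>+h. indicator (ball (y - p) \<rho>) h * gg F h \<partial>lborel)"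
proof -
  have "emeasure lborel (ball p \<rho>) * gg F y = (\<integral>\<^sup>+h. indicator (ball p \<rho>) h * gg F y \<partial>lborel)"
    by (subst nn_integral_multc) auto
  also have "\<dots> \<le> (\<integral>\<^sup>+h. indicator (ball p \<rho>) h * gg F h + indicator (ball p \<rho>) h * gg F (y - h) \<partial>lborel)"
  proof (intro nn_integral_mono)
    fix h :: 'a
    have "gg F y \<le> gg F h + gg F (y - h)" using gg_sub[of F h "y - h"] by simp
    then show "indicator (ball p \<rho>) h * gg F y \<le> indicator (ball p \<rho>) h * gg F h + indicator (ball p \<rho>) h * gg F (y - h)"
      by (auto simp: indicator_def)
  qed
  also have "\<dots> = (\<integral>\<^sup>+h. indicator (ball p \<rho>) h * gg F h \<partial>lborel) + (\<integral>\<^sup>+h. indicator (ball p \<rho>) h * gg F (y - h) \<partial>lborel)"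
    by (subst nn_integral_add) auto
  also have "(\<integral>\<^sup>+h. indicator (ball p \<rho>) h * gg F (y - h) \<partial>lborel) = (\<integral>\<^sup>+h. indicator (ball (y - p) \<rho>) (y - h) * gg F (y - h) \<partial>lborel)"
  proof (intro nn_integral_cong)
    fix h :: 'a
    have "dist (y - p) (y - h) = dist p h" by (simp add: dist_norm algebra_simps norm_minus_commute)
    then show "indicator (ball p \<rho>) h * gg F (y - h) = indicator (ball (y - p) \<rho>) (y - h) * gg F (y - h)"
      by (simp add: indicator_def)
  qed
  also have "\<dots> = (\<integral>\<^sup>+h. indicator (ball (y - p) \<rho>) h * gg F h \<partial>lborel)"
    by (rule nn_refl[of "\<lambda>h. indicator (ball (y - p) \<rho>) h * gg F h"]) measurable
  finally show ?thesis .
qed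

lemma sum_disjoint_le:
  fixes S :: "nat \<Rightarrow> 'a set" and w :: "nat \<Rightarrow> ennreal"
  assumes "\<And>i j. i < N \<Longrightarrow> j < N \<Longrightarrow> i \<noteq> j \<Longrightarrow> S i \<inter> S j = {}"
    and "\<And>j h. j < N \<Longrightarrow> h \<in> S j \<Longrightarrow> w j \<le> K h"
  shows "(\<Sum>j<N. w j * indicator (S j) h) \<le> K h"
proof (cases "\<exists>j<N. h \<in> S j")
  case True
  then obtain j where j: "j < N" "h \<in> S j" by auto
  have "(\<Sum>j<N. w j * indicator (S j) h) = w j * indicator (S j) h + (\<Sum>i\<in>{..<N} - {j}. w i * indicator (S i) h)"
    using j by (subst sum.remove[of _ j]) auto
  also have "(\<Sum>i\<in>{..<N} - {j}. w i * indicator (S i) h) = 0"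
    using assms(1)[of j] j by (intro sum.neutral) (auto simp: indicator_def)
  finally show ?thesis using assms(2)[OF j] j by simp
next
  case False
  then have "(\<Sum>j<N. w j * indicator (S j) h) = 0" by (intro sum.neutral) (auto simp: indicator_def)
  then show ?thesis by simp
qed

lemma nn_lower_disjoint:
  fixes S :: "nat \<Rightarrow> 'a::euclidean_space set" and w :: "nat \<Rightarrow> ennreal" and g K :: "'a \<Rightarrow> ennreal"
  assumes [measurable]: "\<And>j. S j \<in> sets borel" "g \<in> borel_measurable borel"
  assumes "\<And>i j. i < N \<Longrightarrow> j < N \<Longrightarrow> i \<noteq> j \<Longrightarrow> S i \<inter> S j = {}"
    and "\<And>j h. j < N \<Longrightarrow> h \<in> S j \<Longrightarrow> w j \<le> K h"
  shows "(\<Sum>j<N. w j * (\<integral>\<^sup>+h. indicator (S j) h * g h \<partial>lborel)) \<le> (\<integral>\<^sup>+h. K h * g h \<partial>lborel)"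
proof -
  have "(\<Sum>j<N. w j * (\<integral>\<^sup>+h. indicator (S j) h * g h \<partial>lborel)) = (\<Sum>j<N. (\<integral>\<^sup>+h. w j * indicator (S j) h * g h \<partial>lborel))"
    by (intro sum.cong refl) (simp add: nn_integral_cmult[symmetric] mult.assoc)
  also have "\<dots> = (\<integral>\<^sup>+h. (\<Sum>j<N. w j * indicator (S j) h * g h) \<partial>lborel)"
    by (rule nn_integral_sum[symmetric]) auto
  also have "\<dots> \<le> (\<integral>\<^sup>+h. K h * g h \<partial>lborel)"
  proof (intro nn_integral_mono)
    fix h
    have "(\<Sum>j<N. w j * indicator (S j) h * g h) = (\<Sum>j<N. w j * indicator (S j) h) * g h"
      by (simp only: sum_distrib_right)
    also have "\<dots> \<le> K h * g h"
      by (intro mult_right_mono sum_disjoint_le assms) auto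
    finally show "(\<Sum>j<N. w j * indicator (S j) h * g h) \<le> K h * g h" .
  qed
  finally show ?thesis .
qed

definition rho :: "real \<Rightarrow> nat \<Rightarrow> real" where "rho t j = t / (4 * 8 ^ j)"

definition Sset :: "'a::euclidean_space \<Rightarrow> real \<Rightarrow> 'a set" where
  "Sset e \<rho> = ball ((6 * \<rho>) *\<^sub>R e) \<rho> \<union> ball ((-2 * \<rho>) *\<^sub>R e) \<rho>"

lemma Sset_borel[measurable]: "Sset e \<rho> \<in> sets borel"
  unfolding Sset_def by measurable

lemma Sset_norm:
  assumes "norm e = 1" "h \<in> Sset e \<rho>"
  shows "\<rho> < norm h" "norm h < 7 * \<rho>"
proof -
  have n6: "norm ((6 * \<rho>) *\<^sub>R e) = 6 * \<bar>\<rho>\<bar>" and n2: "norm ((-2 * \<rho>) *\<^sub>R e) = 2 * \<bar>\<rho>\<bar>"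
    using assms(1) by (auto simp: abs_mult)
  have tri1: "norm a - norm (a - h) \<le> norm h" "norm h \<le> norm a + norm (h - a)" for a :: 'a
    using norm_triangle_ineq2[of a "a - h"] norm_triangle_ineq[of a "h - a"] by auto
  from assms(2) have "dist ((6 * \<rho>) *\<^sub>R e) h < \<rho> \<or> dist ((-2 * \<rho>) *\<^sub>R e) h < \<rho>"
    unfolding Sset_def by auto
  then have "\<rho> < norm h \<and> norm h < 7 * \<rho>"
  proof
    assume a: "dist ((6 * \<rho>) *\<^sub>R e) h < \<rho>"
    then have "0 < \<rho>" by (meson dist_not_less_zero le_less_trans linorder_not_le)
    with a tri1[of "(6 * \<rho>) *\<^sub>R e"] n6 show ?thesis by (auto simp: dist_norm norm_minus_commute)
  next
    assume a: "dist ((-2 * \<rho>) *\<^sub>R e) h < \<rho>"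
    then have "0 < \<rho>" by (meson dist_not_less_zero le_less_trans linorder_not_le)
    with a tri1[of "(-2 * \<rho>) *\<^sub>R e"] n2 show ?thesis by (auto simp: dist_norm norm_minus_commute)
  qed
  then show "\<rho> < norm h" "norm h < 7 * \<rho>" by auto
qed

lemma Sset_int:
  fixes F :: "'a::euclidean_space set"
  assumes [measurable]: "F \<in> sets borel" and e: "norm e = 1" and "\<rho> > 0"
  shows "emeasure lborel (ball ((6 * \<rho>) *\<^sub>R e) \<rho>) * gg F ((4 * \<rho>) *\<^sub>R e) \<le> (\<integral>\<^sup>+h. indicator (Sset e \<rho>) h * gg F h \<partial>lborel)"
proof -
  have disj: "ball ((6 * \<rho>) *\<^sub>R e) \<rho> \<inter> ball ((-2 * \<rho>) *\<^sub>R e) \<rho> = {}"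
  proof (rule ccontr)
    assume "\<not> ?thesis"
    then obtain h where h: "dist ((6 * \<rho>) *\<^sub>R e) h < \<rho>" "dist ((-2 * \<rho>) *\<^sub>R e) h < \<rho>" by auto
    have "(6 * \<rho>) *\<^sub>R e - (-2 * \<rho>) *\<^sub>R e = (6 * \<rho> - -2 * \<rho>) *\<^sub>R e"
      by (rule scaleR_diff_left[symmetric])
    then have "dist ((6 * \<rho>) *\<^sub>R e) ((-2 * \<rho>) *\<^sub>R e) = 8 * \<rho>"
      using e \<open>\<rho> > 0\<close> by (simp add: dist_norm)
    moreover have "dist ((6 * \<rho>) *\<^sub>R e) ((-2 * \<rho>) *\<^sub>R e) \<le> dist ((6 * \<rho>) *\<^sub>R e) h + dist ((-2 * \<rho>) *\<^sub>R e) h"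
      by (rule dist_triangle2)
    ultimately show False using h \<open>\<rho> > 0\<close> by linarith
  qed
  have ind: "indicator (Sset e \<rho>) h = (indicator (ball ((6 * \<rho>) *\<^sub>R e) \<rho>) h + indicator (ball ((-2 * \<rho>) *\<^sub>R e) \<rho>) h :: ennreal)" for h
    using disj unfolding Sset_def by (auto simp: indicator_def)
  have "emeasure lborel (ball ((6 * \<rho>) *\<^sub>R e) \<rho>) * gg F ((4 * \<rho>) *\<^sub>R e) \<le>
     (\<integral>\<^sup>+h. indicator (ball ((6 * \<rho>) *\<^sub>R e) \<rho>) h * gg F h \<partial>lborel) + (\<integral>\<^sup>+h. indicator (ball ((4 * \<rho>) *\<^sub>R e - (6 * \<rho>) *\<^sub>R e) \<rho>) h * gg F h \<partial>lborel)"
    by (rule gg_ball) fact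
  also have "(4 * \<rho>) *\<^sub>R e - (6 * \<rho>) *\<^sub>R e = (-2 * \<rho>) *\<^sub>R e"
    by (subst scaleR_diff_left[symmetric]) simp
  also have "(\<integral>\<^sup>+h. indicator (ball ((6 * \<rho>) *\<^sub>R e) \<rho>) h * gg F h \<partial>lborel) + (\<integral>\<^sup>+h. indicator (ball ((-2 * \<rho>) *\<^sub>R e) \<rho>) h * gg F h \<partial>lborel)
     = (\<integral>\<^sup>+h. indicator (Sset e \<rho>) h * gg F h \<partial>lborel)"
    unfolding ind by (subst nn_integral_add[symmetric]) (auto simp: distrib_right)
  finally show ?thesis .
qed

lemma kernel_ge:
  assumes "0 < r" "r \<le> R" "u \<le> R" "0 \<le> real d + s"
  shows "R powr (-(real d + s)) \<le> kernel_k d s r u"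
proof (cases "u \<le> r")
  case True then show ?thesis unfolding kernel_k_def using assms by (auto intro: powr_mono2')
next
  case False then show ?thesis unfolding kernel_k_def using assms by (auto intro: powr_mono2')
qed

lemma rho_pos: "t > 0 \<Longrightarrow> rho t j > 0" by (simp add: rho_def)

lemma rho_disj:
  assumes "norm e = 1" "t > 0" "i \<noteq> j"
  shows "Sset e (rho t i) \<inter> Sset e (rho t j) = {}"
proof -
  have key: "Sset e (rho t i) \<inter> Sset e (rho t j) = {}" if "i < j" for i j
  proof -
    have "(8::real) ^ j = 8 ^ i * 8 ^ (j - i)" using that by (simp flip: power_add)
    moreover have "(8::real) ^ (j - i) \<ge> 8 ^ 1" using that
      by (intro power_increasing) auto
    ultimately have "(8::real) ^ j \<ge> 8 * 8 ^ i" by simp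
    then have "8 * rho t j \<le> rho t i" unfolding rho_def using assms(2)
      by (simp add: field_simps)
    moreover have "rho t j > 0" by (rule rho_pos) fact
    moreover
    { fix h assume "h \<in> Sset e (rho t i)" "h \<in> Sset e (rho t j)"
      then have "rho t i < norm h" "norm h < 7 * rho t j"
        using Sset_norm[OF assms(1)] by blast+ }
    ultimately show ?thesis by force
  qed
  show ?thesis using assms(3) key[of i j] key[of j i] by (cases "i < j") auto
qed

lemma ball_emeasure:
  fixes c :: "'a::euclidean_space"
  assumes "\<rho> \<ge> 0"
  shows "emeasure lborel (ball c \<rho>) = ennreal (\<rho> ^ DIM('a) * measure lborel (ball (0::'a) 1))"
proof -
  have "emeasure lborel (ball c \<rho>) = emeasure lebesgue (ball c \<rho>)" by simp
  also have "\<dots> = ennreal (\<rho> ^ DIM('a)) * emeasure lebesgue (ball (0 :: 'a) 1)"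
    by (rule emeasure_lebesgue_ball_conv_unit_ball) fact
  also have "emeasure lebesgue (ball (0 :: 'a) 1) = ennreal (measure lborel (ball (0::'a) 1))"
    using emeasure_lborel_ball_finite[of "0::'a" 1] by (simp add: emeasure_eq_ennreal_measure)
  finally show ?thesis using assms by (simp add: ennreal_mult)
qed

lemma real_ident:
  fixes \<rho> t \<kappa> s :: real and d j :: nat
  assumes "\<rho> > 0" "t = 4 * \<rho> * 8 ^ j"
  shows "(7 * \<rho>) powr (-(real d + s)) * (\<rho> ^ d * \<kappa>) * (1 / 8 ^ j)
       = 4 * \<kappa> * 7 powr (-(real d + s)) * \<rho> powr (1 - s) / t"
proof -
  have e1: "1 - s = -(real d + s) + real d + 1" by simp
  have "\<rho> powr (1 - s) = \<rho> powr (-(real d + s)) * \<rho> powr (real d) * \<rho> powr 1"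
    by (simp only: e1 powr_add)
  also have "\<dots> = \<rho> powr (-(real d + s)) * \<rho> ^ d * \<rho>" using assms(1) by (simp add: powr_realpow)
  finally have *: "\<rho> powr (1 - s) = \<rho> powr (-(real d + s)) * \<rho> ^ d * \<rho>" .
  show ?thesis unfolding * assms(2) powr_mult using assms(1) by (simp add: field_simps)
qed

lemma J_lower:
  fixes F :: "'a::euclidean_space set" and e :: 'a
  assumes [measurable]: "F \<in> sets borel" and e: "norm e = 1" and t: "t > 0" and r: "r > 0" and s: "s \<ge> 0"
    and rN: "\<And>j. j < N \<Longrightarrow> r \<le> 7 * rho t j"
  shows "ennreal (\<Sum>j<N. 4 * measure lborel (ball (0::'a) 1) * 7 powr (-(real DIM('a) + s)) * rho t j powr (1 - s) / t)
           * gg F (t *\<^sub>R e) \<le> Jtilde s r F"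
proof -
  define \<kappa> where "\<kappa> = measure lborel (ball (0::'a) 1)"
  have \<kappa>: "\<kappa> \<ge> 0" unfolding \<kappa>_def by simp
  define d where "d = DIM('a)"
  define w where "w j = ennreal ((7 * rho t j) powr (-(real d + s)))" for j
  define c where "c j = 4 * \<kappa> * 7 powr (-(real d + s)) * rho t j powr (1 - s) / t" for j
  have c0: "c j \<ge> 0" for j unfolding c_def using \<kappa> t by simp
  have step1: "(\<Sum>j<N. w j * (\<integral>\<^sup>+h. indicator (Sset e (rho t j)) h * gg F h \<partial>lborel))
      \<le> (\<integral>\<^sup>+h. ennreal (kernel_k DIM('a) s r (norm h)) * gg F h \<partial>lborel)"
  proof (rule nn_lower_disjoint)
    show "\<And>i j. i < N \<Longrightarrow> j < N \<Longrightarrow> i \<noteq> j \<Longrightarrow> Sset e (rho t i) \<inter> Sset e (rho t j) = {}"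
      using rho_disj[OF e t] by blast
    fix j h assume j: "j < N" and h: "h \<in> Sset e (rho t j)"
    have "(7 * rho t j) powr (-(real d + s)) \<le> kernel_k d s r (norm h)"
      using Sset_norm[OF e h] rN[OF j] r s by (intro kernel_ge) auto
    then show "w j \<le> ennreal (kernel_k DIM('a) s r (norm h))"
      unfolding w_def d_def by (simp add: ennreal_leI)
  qed auto
  have step2: "ennreal (c j) * gg F (t *\<^sub>R e) \<le> w j * (\<integral>\<^sup>+h. indicator (Sset e (rho t j)) h * gg F h \<partial>lborel)" for j
  proof -
    define \<rho> where "\<rho> = rho t j"
    have \<rho>: "\<rho> > 0" unfolding \<rho>_def using rho_pos[OF t] .
    have tt: "t = 4 * \<rho> * 8 ^ j" unfolding \<rho>_def rho_def by simp
    have "gg F (t *\<^sub>R e) = gg F (real (8 ^ j) *\<^sub>R ((4 * \<rho>) *\<^sub>R e))"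
      unfolding tt by (simp add: algebra_simps)
    also have "\<dots> \<le> of_nat (8 ^ j) * gg F ((4 * \<rho>) *\<^sub>R e)" by (rule gg_mult) fact
    finally have g1: "gg F (t *\<^sub>R e) \<le> of_nat (8 ^ j) * gg F ((4 * \<rho>) *\<^sub>R e)" .
    have g2: "ennreal (1 / 8 ^ j) * gg F (t *\<^sub>R e) \<le> gg F ((4 * \<rho>) *\<^sub>R e)"
    proof -
      have "ennreal (1 / 8 ^ j) * gg F (t *\<^sub>R e) \<le> ennreal (1 / 8 ^ j) * (of_nat (8 ^ j) * gg F ((4 * \<rho>) *\<^sub>R e))"
        by (intro mult_left_mono g1) auto
      also have "ennreal (1 / 8 ^ j) * of_nat (8 ^ j) = 1"
        by (simp add: ennreal_of_nat_eq_real_of_nat flip: ennreal_mult)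
      then have "ennreal (1 / 8 ^ j) * (of_nat (8 ^ j) * gg F ((4 * \<rho>) *\<^sub>R e)) = gg F ((4 * \<rho>) *\<^sub>R e)"
        by (simp flip: mult.assoc)
      finally show ?thesis .
    qed
    have cj: "c j = (7 * \<rho>) powr (-(real d + s)) * (\<rho> ^ d * \<kappa>) * (1 / 8 ^ j)"
      unfolding c_def \<rho>_def[symmetric] by (rule real_ident[symmetric]) (use \<rho> tt in auto)
    define A where "A = (7 * \<rho>) powr (-(real d + s))"
    define B where "B = \<rho> ^ d * \<kappa>"
    define C where "C = (1::real) / 8 ^ j"
    have eA: "A \<ge> 0" "B \<ge> 0" "C \<ge> 0" unfolding A_def B_def C_def using \<rho> \<kappa> by auto
    have "ennreal (A*B*C) = ennreal (A*B) * ennreal C" by (rule ennreal_mult) (use eA in auto)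
    also have "ennreal (A*B) = ennreal A * ennreal B" by (rule ennreal_mult) (use eA in auto)
    finally have eABC: "ennreal (A*B*C) = ennreal A * ennreal B * ennreal C" .
    have cjABC: "c j = A*B*C" unfolding A_def B_def C_def by (rule cj)
    have "ennreal (c j) * gg F (t *\<^sub>R e) = w j * ennreal (\<rho> ^ d * \<kappa>) * (ennreal (1 / 8 ^ j) * gg F (t *\<^sub>R e))"
      unfolding w_def \<rho>_def[symmetric] A_def[symmetric] B_def[symmetric] C_def[symmetric]
      unfolding cjABC eABC by (simp only: mult.assoc)
    also have "\<dots> \<le> w j * ennreal (\<rho> ^ d * \<kappa>) * gg F ((4 * \<rho>) *\<^sub>R e)"
      by (intro mult_left_mono g2) auto
    also have "ennreal (\<rho> ^ d * \<kappa>) = emeasure lborel (ball ((6 * \<rho>) *\<^sub>R e) \<rho>)"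
      unfolding d_def \<kappa>_def using \<rho> by (simp add: ball_emeasure)
    also have "w j * emeasure lborel (ball ((6 * \<rho>) *\<^sub>R e) \<rho>) * gg F ((4 * \<rho>) *\<^sub>R e)
        \<le> w j * (\<integral>\<^sup>+h. indicator (Sset e \<rho>) h * gg F h \<partial>lborel)"
      unfolding mult.assoc by (intro mult_left_mono Sset_int) (use e \<rho> in auto)
    finally show ?thesis unfolding \<rho>_def .
  qed
  have "ennreal (\<Sum>j<N. c j) * gg F (t *\<^sub>R e) = (\<Sum>j<N. ennreal (c j) * gg F (t *\<^sub>R e))"
  proof -
    have "ennreal (\<Sum>j<N. c j) = (\<Sum>j<N. ennreal (c j))" using c0 by (simp add: sum_ennreal)
    then show ?thesis by (simp only: sum_distrib_right)
  qed
  also have "\<dots> \<le> (\<Sum>j<N. w j * (\<integral>\<^sup>+h. indicator (Sset e (rho t j)) h * gg F h \<partial>lborel))"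
    by (intro sum_mono step2)
  also note step1
  also have "(\<integral>\<^sup>+h. ennreal (kernel_k DIM('a) s r (norm h)) * gg F h \<partial>lborel) = Jtilde s r F"
    by (rule J_eq[symmetric]) fact
  finally show ?thesis unfolding c_def \<kappa>_def d_def .
qed

lemma N_choice:
  fixes t r :: real
  assumes "t > 0" "r > 0" "r < t / 8"
  defines "N \<equiv> nat \<lfloor>log 8 (t / r)\<rfloor>"
  shows "N \<ge> 1" "8 ^ N \<le> t / r" "t / r < 8 ^ (N + 1)" "real N > log 8 (t / r) - 1"
proof -
  have q: "t / r > 8" using assms by (simp add: field_simps)
  have l1: "log 8 (t / r) > 1" using q by (subst less_log_iff) auto
  have fl: "real_of_int \<lfloor>log 8 (t / r)\<rfloor> \<le> log 8 (t / r)" "log 8 (t / r) < real_of_int \<lfloor>log 8 (t / r)\<rfloor> + 1"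
    by linarith+
  have fpos: "\<lfloor>log 8 (t / r)\<rfloor> \<ge> 1" using l1 by linarith
  then have NN: "real N = real_of_int \<lfloor>log 8 (t / r)\<rfloor>" unfolding N_def by simp
  show "N \<ge> 1" unfolding N_def using fpos by linarith
  have "(8::real) ^ N = 8 powr (real N)" by (simp add: powr_realpow)
  also have "\<dots> \<le> 8 powr (log 8 (t / r))" using fl NN by (intro powr_mono) auto
  also have "\<dots> = t / r" using q by simp
  finally show "8 ^ N \<le> t / r" .
  have "real (N + 1) = real N + 1" by simp
  then have lN: "log 8 (t / r) < real (N + 1)" using fl(2) NN by linarith
  have "t / r = 8 powr (log 8 (t / r))" using q by simp
  also have "\<dots> < 8 powr (real (N + 1))" using lN by (intro powr_less_mono) auto
  also have "\<dots> = 8 ^ (N + 1)" by (rule powr_realpow) simp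
  finally show "t / r < 8 ^ (N + 1)" .
  show "real N > log 8 (t / r) - 1" using fl NN by linarith
qed


lemma rho_ge:
  assumes "t > 0" "r > 0" "8 ^ N \<le> t / r" "j < N"
  shows "r \<le> 7 * rho t j"
proof -
  have "(8::real) ^ (j + 1) \<le> 8 ^ N" using assms(4) by (intro power_increasing) auto
  then have "8 * 8 ^ j * r \<le> 8 ^ N * r" using assms(2) by (intro mult_right_mono) auto
  also have "8 ^ N * r \<le> t" using assms(2,3) by (simp add: field_simps)
  finally have a: "8 * 8 ^ j * r \<le> t" .
  have "4 * 8 ^ j * r \<le> 8 * 8 ^ j * r" using assms(2) by (intro mult_right_mono) auto
  with a assms(1) have "4 * 8 ^ j * r \<le> 7 * t" by linarith
  then show ?thesis unfolding rho_def using assms(2) by (simp add: field_simps)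
qed

lemma aux_lin: "(a::real) - b - c < x \<Longrightarrow> b < 2*(a - c) \<Longrightarrow> -b \<le> 2*x" by (simp add: algebra_simps)

lemma scale_choice:
  fixes s :: real and d :: nat
  assumes s: "s \<ge> 1"
  obtains K where "K > 0" "\<And>t. t > 0 \<Longrightarrow> \<exists>r0>0. \<forall>r. 0 < r \<and> r < r0 \<longrightarrow>
     (\<exists>N. (\<forall>j<N. r \<le> 7 * rho t j) \<and> 0 < sigma_s d s r \<and> sigma_s d s r \<le> K * (\<Sum>j<N. rho t j powr (1 - s)))"
proof (cases "s = 1")
  case True
  show ?thesis
  proof (rule that[of "2 * ln 8"])
    show "0 < 2 * ln (8::real)" by simp
    fix t :: real assume t: "t > 0"
    show "\<exists>r0>0. \<forall>r. 0 < r \<and> r < r0 \<longrightarrow>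
     (\<exists>N. (\<forall>j<N. r \<le> 7 * rho t j) \<and> 0 < sigma_s d s r \<and> sigma_s d s r \<le> 2 * ln 8 * (\<Sum>j<N. rho t j powr (1 - s)))"
    proof (intro exI[of _ "min (t/8) (min 1 ((t/8)^2))"] conjI allI impI)
      show "0 < min (t/8) (min 1 ((t/8)^2))" using t by simp
      fix r :: real assume r: "0 < r \<and> r < min (t/8) (min 1 ((t/8)^2))"
      define N where "N = nat \<lfloor>log 8 (t / r)\<rfloor>"
      have NC: "N \<ge> 1" "8 ^ N \<le> t / r" "t / r < 8 ^ (N + 1)" "real N > log 8 (t / r) - 1"
        using N_choice[of t r] t r unfolding N_def by auto
      have sig: "sigma_s d s r = - ln r" unfolding sigma_s_def using True r by simp
      have "(\<Sum>j<N. rho t j powr (1 - s)) = (\<Sum>j<N. 1)"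
      proof (intro sum.cong refl)
        fix j show "rho t j powr (1 - s) = 1" using rho_pos[OF t, of j] True by simp
      qed
      then have sum: "(\<Sum>j<N. rho t j powr (1 - s)) = real N" by simp
      have "ln r < ln ((t/8)^2)" using r t by (subst ln_less_cancel_iff) auto
      also have "ln ((t/8)^2) = 2 * (ln t - ln 8)" using t by (simp add: ln_realpow ln_div)
      finally have lr: "ln r < 2 * (ln t - ln 8)" .
      have l8: "ln 8 * log 8 (t / r) = ln t - ln r" using t r by (simp add: log_def ln_div)
      have "ln 8 * log 8 (t / r) < ln 8 * (1 + real N)" using NC(4) by (intro mult_strict_left_mono) auto
      then have "real N * ln 8 > ln t - ln r - ln 8" unfolding l8 by (simp add: algebra_simps)
      from aux_lin[OF this lr] have "- ln r \<le> 2 * ln 8 * real N" by (simp add: mult.commute mult.left_commute)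
      moreover have "\<forall>j<N. r \<le> 7 * rho t j" using rho_ge[OF t _ NC(2)] r by auto
      moreover have "0 < - ln r" using r by simp
      ultimately show "\<exists>N. (\<forall>j<N. r \<le> 7 * rho t j) \<and> 0 < sigma_s d s r \<and> sigma_s d s r \<le> 2 * ln 8 * (\<Sum>j<N. rho t j powr (1 - s))"
        using sig sum by auto
    qed
  qed
next
  case False
  then have s1: "s > 1" using s by simp
  define K where "K = (real d + s) / ((real d + 1) * (s - 1)) * 16 powr (s - 1)"
  show ?thesis
  proof (rule that[of K])
    show "0 < K" unfolding K_def using s1 by (simp add: add_pos_nonneg)
    fix t :: real assume t: "t > 0"
    show "\<exists>r0>0. \<forall>r. 0 < r \<and> r < r0 \<longrightarrow>
     (\<exists>N. (\<forall>j<N. r \<le> 7 * rho t j) \<and> 0 < sigma_s d s r \<and> sigma_s d s r \<le> K * (\<Sum>j<N. rho t j powr (1 - s)))"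
    proof (intro exI[of _ "t/8"] conjI allI impI)
      show "0 < t / 8" using t by simp
      fix r :: real assume r: "0 < r \<and> r < t / 8"
      define N where "N = nat \<lfloor>log 8 (t / r)\<rfloor>"
      have NC: "N \<ge> 1" "8 ^ N \<le> t / r" "t / r < 8 ^ (N + 1)" "real N > log 8 (t / r) - 1"
        using N_choice[of t r] t r unfolding N_def by auto
      have sig: "sigma_s d s r = (real d + s) / (real d + 1) * r powr (1 - s) / (s - 1)"
        unfolding sigma_s_def using False by simp
      have sigpos: "0 < sigma_s d s r" unfolding sig using s1 r by (simp add: add_pos_nonneg)
      define \<rho> where "\<rho> = rho t (N - 1)"
      have \<rho>0: "\<rho> > 0" unfolding \<rho>_def using rho_pos[OF t] .
      have NN2: "N + 1 = (N - 1) + 2" using NC(1) by simp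
      have "(8::real) ^ (N + 1) = 64 * 8 ^ (N - 1)" unfolding NN2 power_add by simp
      then have "t < 64 * 8 ^ (N - 1) * r" using NC(3) r by (simp add: field_simps)
      then have \<rho>le: "\<rho> \<le> 16 * r" unfolding \<rho>_def rho_def by (simp add: field_simps)
      have "(16 * r) powr (1 - s) \<le> \<rho> powr (1 - s)" using \<rho>le \<rho>0 s1 by (intro powr_mono2') auto
      also have "\<rho> powr (1 - s) \<le> (\<Sum>j<N. rho t j powr (1 - s))"
        unfolding \<rho>_def using NC(1) by (intro member_le_sum) auto
      finally have A: "16 powr (1 - s) * r powr (1 - s) \<le> (\<Sum>j<N. rho t j powr (1 - s))"
        using r by (simp add: powr_mult)
      have "sigma_s d s r = K * (16 powr (1 - s) * r powr (1 - s))"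
      proof -
        have "16 powr (s - 1) * 16 powr (1 - s) = (1::real)" by (simp flip: powr_add)
        then show ?thesis unfolding sig K_def using s1 by (simp add: field_simps)
      qed
      also have "\<dots> \<le> K * (\<Sum>j<N. rho t j powr (1 - s))"
        using A \<open>0 < K\<close> by (intro mult_left_mono) auto
      finally show "\<exists>N. (\<forall>j<N. r \<le> 7 * rho t j) \<and> 0 < sigma_s d s r \<and> sigma_s d s r \<le> K * (\<Sum>j<N. rho t j powr (1 - s))"
        using rho_ge[OF t _ NC(2)] r sigpos by auto
    qed
  qed
qed

lemma pw_le:
  "(indicator E x * indicator (UNIV - E) (x + h) :: ennreal) \<le> indicator F x * indicator (UNIV - F) (x + h) +
     (ennreal \<bar>indicator E x - indicator F x :: real\<bar> + ennreal \<bar>indicator E (x + h) - indicator F (x + h) :: real\<bar>)"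
proof (cases "x \<in> E \<and> x + h \<notin> E")
  case True
  then show ?thesis by (cases "x \<in> F"; cases "x + h \<in> F") simp_all
next
  case False
  then have z: "(indicator E x * indicator (UNIV - E) (x + h) :: ennreal) = 0" by (auto simp: indicator_def)
  show ?thesis by (subst z) simp
qed

lemma gg_compare:
  fixes E F :: "'a::euclidean_space set"
  assumes [measurable]: "E \<in> sets borel" "F \<in> sets borel"
  shows "gg E h \<le> gg F h + 2 * (\<integral>\<^sup>+x. ennreal \<bar>indicator E x - indicator F x :: real\<bar> \<partial>lborel)"
proof -
  let ?D = "\<lambda>x. ennreal \<bar>indicator E x - indicator F x :: real\<bar>"
  have "gg E h \<le> (\<integral>\<^sup>+x. indicator F x * indicator (UNIV - F) (x + h) + (?D x + ?D (x + h)) \<partial>lborel)"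
    unfolding gg_def by (intro nn_integral_mono pw_le)
  also have "\<dots> = gg F h + ((\<integral>\<^sup>+x. ?D x \<partial>lborel) + (\<integral>\<^sup>+x. ?D (x + h) \<partial>lborel))"
  proof -
    have m1: "(\<lambda>x. indicator F x * indicator (UNIV - F) (x + h) :: ennreal) \<in> borel_measurable lborel" by measurable
    have m2: "?D \<in> borel_measurable lborel" by measurable
    have m3: "(\<lambda>x. ?D (x + h)) \<in> borel_measurable lborel" by measurable
    show ?thesis unfolding gg_def
      by (simp only: nn_integral_add[OF m1 borel_measurable_add[OF m2 m3]] nn_integral_add[OF m2 m3])
  qed
  also have "(\<integral>\<^sup>+x. ?D (x + h) \<partial>lborel) = (\<integral>\<^sup>+x. ?D x \<partial>lborel)"
    by (rule nn_transl) measurable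
  finally show ?thesis by (simp add: mult_2)
qed

lemma gg_le_measure:
  fixes F :: "'a::euclidean_space set"
  assumes [measurable]: "F \<in> sets borel"
  shows "gg F h \<le> emeasure lborel F"
proof -
  have "gg F h \<le> (\<integral>\<^sup>+x. indicator F x \<partial>lborel)"
    unfolding gg_def by (intro nn_integral_mono) (auto simp: indicator_def)
  then show ?thesis by simp
qed

lemma integrable_transl:
  fixes f :: "'a::euclidean_space \<Rightarrow> real"
  assumes "integrable lborel f" and [measurable]: "f \<in> borel_measurable borel"
  shows "integrable lborel (\<lambda>x. f (x + c))"
proof -
  have "integrable (distr lborel borel ((+) c)) f" using assms(1) by (simp add: lborel_distr_plus)
  then have "integrable lborel (\<lambda>x. f (c + x))" by (subst (asm) integrable_distr_eq) auto
  then show ?thesis by (simp add: add.commute)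
qed

lemma gg_real:
  fixes E :: "'a::euclidean_space set"
  assumes [measurable]: "E \<in> sets borel"
  shows "(LINT x|lborel. indicator E x * indicator (UNIV - E) (x + h) :: real) = enn2real (gg E h)"
proof -
  have "(LINT x|lborel. indicator E x * indicator (UNIV - E) (x + h) :: real)
       = enn2real (\<integral>\<^sup>+ x. ennreal (indicator E x * indicator (UNIV - E) (x + h) :: real) \<partial>lborel)"
    by (rule integral_eq_nn_integral) auto
  also have "(\<lambda>x. ennreal (indicator E x * indicator (UNIV - E) (x + h) :: real)) = (\<lambda>x. indicator E x * indicator (UNIV - E) (x + h))"
    by (auto simp: indicator_def fun_eq_iff)
  finally show ?thesis unfolding gg_def .
qed

lemma shift_bound:
  fixes E :: "'a::euclidean_space set" and \<psi> :: "'a \<Rightarrow> real"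
  assumes [measurable]: "E \<in> sets borel" and fin: "emeasure lborel E < \<infinity>"
    and [measurable]: "\<psi> \<in> borel_measurable borel" and bd: "\<And>x. \<bar>\<psi> x\<bar> \<le> 1"
  shows "(LINT x|lborel. indicator E x * (\<psi> (x + h) - \<psi> x)) \<le> enn2real (gg E h) + enn2real (gg E (-h))"
proof -
  have iE: "integrable lborel (indicator E :: 'a \<Rightarrow> real)" using fin by auto
  have iEh: "integrable lborel (\<lambda>x. indicator E (x + c) :: real)" for c
    by (rule integrable_transl[OF iE]) auto
  have ib: "integrable lborel f" if "f \<in> borel_measurable borel" "\<And>x. \<bar>f x\<bar> \<le> indicator E (x + c) + indicator E (x + c')" for f :: "'a \<Rightarrow> real" and c c'
    by (rule Bochner_Integration.integrable_bound[where f="\<lambda>x. indicator E (x + c) + indicator E (x + c') :: real"])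
       (use that iEh in \<open>auto simp: measurable_completion intro!: integrable_add\<close>)
  have i1: "integrable lborel (\<lambda>x. indicator E x * \<psi> (x + h))"
    by (rule ib[of _ 0 0]) (auto simp: abs_mult indicator_def intro: order_trans[OF bd])
  have i2: "integrable lborel (\<lambda>x. indicator E x * \<psi> x)"
    by (rule ib[of _ 0 0]) (auto simp: abs_mult indicator_def intro: order_trans[OF bd])
  have i3: "integrable lborel (\<lambda>x. indicator E (x - h) * \<psi> x)"
    by (rule ib[of _ "-h" "-h"]) (auto simp: abs_mult indicator_def intro: order_trans[OF bd])
  have i4: "integrable lborel (\<lambda>x. indicator E (x - h) * indicator (UNIV - E) x :: real)"
    by (rule ib[of _ "-h" "-h"]) (auto simp: indicator_def)
  have i5: "integrable lborel (\<lambda>x. indicator E x * indicator (UNIV - E) (x - h) :: real)"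
    by (rule ib[of _ 0 0]) (auto simp: indicator_def)
  have "(LINT x|lborel. indicator E x * (\<psi> (x + h) - \<psi> x))
      = (LINT x|lborel. indicator E x * \<psi> (x + h)) - (LINT x|lborel. indicator E x * \<psi> x)"
    using i1 i2 by (simp add: right_diff_distrib)
  also have "(LINT x|lborel. indicator E x * \<psi> (x + h)) = (LINT x|lborel. indicator E (x - h) * \<psi> x)"
    using int_transl[of "\<lambda>x. indicator E (x - h) * \<psi> x" h] by simp
  also have "(LINT x|lborel. indicator E (x - h) * \<psi> x) - (LINT x|lborel. indicator E x * \<psi> x)
      = (LINT x|lborel. (indicator E (x - h) - indicator E x) * \<psi> x)"
    using i2 i3 by (simp add: left_diff_distrib)
  also have "\<dots> \<le> (LINT x|lborel. indicator E (x - h) * indicator (UNIV - E) x + indicator E x * indicator (UNIV - E) (x - h))"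
  proof (rule integral_mono)
    show "integrable lborel (\<lambda>x. (indicator E (x - h) - indicator E x) * \<psi> x)" using i2 i3 by (simp add: left_diff_distrib)
    show "integrable lborel (\<lambda>x. indicator E (x - h) * indicator (UNIV - E) x + indicator E x * indicator (UNIV - E) (x - h) :: real)"
      using i4 i5 by auto
    fix x
    have "(indicator E (x - h) - indicator E x) * \<psi> x \<le> \<bar>(indicator E (x - h) - indicator E x) * \<psi> x\<bar>" by simp
    also have "\<dots> \<le> \<bar>indicator E (x - h) - indicator E x :: real\<bar>"
      using bd[of x] by (auto simp: abs_mult indicator_def)
    also have "\<dots> = indicator E (x - h) * indicator (UNIV - E) x + indicator E x * indicator (UNIV - E) (x - h)"
      by (auto simp: indicator_def)
    finally show "(indicator E (x - h) - indicator E x) * \<psi> x \<le> indicator E (x - h) * indicator (UNIV - E) x + indicator E x * indicator (UNIV - E) (x - h)" .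
  qed
  also have "\<dots> = (LINT x|lborel. indicator E (x - h) * indicator (UNIV - E) x) + (LINT x|lborel. indicator E x * indicator (UNIV - E) (x - h) :: real)"
    using i4 i5 by simp
  also have "(LINT x|lborel. indicator E (x - h) * indicator (UNIV - E) x :: real) = (LINT x|lborel. indicator E x * indicator (UNIV - E) (x + h) :: real)"
    using int_transl[of "\<lambda>x. indicator E (x - h) * indicator (UNIV - E) x :: real" h] by simp
  also have "\<dots> = enn2real (gg E h)" by (rule gg_real) fact
  also have "(LINT x|lborel. indicator E x * indicator (UNIV - E) (x - h) :: real) = enn2real (gg E (-h))"
    using gg_real[of E "-h"] by simp
  finally show ?thesis .
qed

lemma D_bounded:
  fixes \<phi> :: "'a::euclidean_space \<Rightarrow> 'a" and D :: "'a \<Rightarrow> ('a \<Rightarrow>\<^sub>L 'a)"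
  assumes Dc: "continuous_on UNIV D" and Dd: "\<And>x. (\<phi> has_derivative blinfun_apply (D x)) (at x)"
    and cpt: "compact (closure {x. \<phi> x \<noteq> 0})"
  obtains B where "B \<ge> 0" "\<And>x. norm (D x) \<le> B"
proof -
  define K where "K = closure {x. \<phi> x \<noteq> 0}"
  have "compact (D ` K)" unfolding K_def
    by (rule compact_continuous_image[OF continuous_on_subset[OF Dc subset_UNIV] cpt])
  then have "bounded (D ` K)" by (rule compact_imp_bounded)
  then have "\<exists>B0. \<forall>y\<in>D ` K. norm y \<le> B0" by (simp only: Elementary_Metric_Spaces.bounded_iff)
  then obtain B0 where B0: "\<forall>y\<in>D ` K. norm y \<le> B0" by (elim exE)
  define B where "B = max B0 0"
  have nb: "norm (D x) \<le> B" for x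
  proof (cases "x \<in> K")
    case True then show ?thesis using B0 unfolding B_def by auto
  next
    case False
    have op: "open (UNIV - K)" unfolding K_def by (rule open_Diff) auto
    have z: "(\<lambda>_. 0) y = \<phi> y" if "y \<in> UNIV - K" for y
    proof (rule ccontr)
      assume "(\<lambda>_. 0) y \<noteq> \<phi> y"
      then have "y \<in> {x. \<phi> x \<noteq> 0}" by simp
      then have "y \<in> K" unfolding K_def by (rule closure_subset[THEN subsetD])
      then show False using that by blast
    qed
    have "((\<lambda>_. 0::'a) has_derivative (\<lambda>_. 0)) (at x)" by (rule has_derivative_const)
    then have "(\<phi> has_derivative (\<lambda>_. 0)) (at x)"
      by (rule has_derivative_transform_within_open[OF _ op _ z]) (use False in blast)
    then have bz: "blinfun_apply (D x) = (\<lambda>_. 0)" by (rule has_derivative_unique[OF Dd])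
    have "D x = 0" by (rule blinfun_eqI) (simp add: bz)
    then show ?thesis unfolding B_def by simp
  qed
  show ?thesis
  proof (rule that[of B])
    show "B \<ge> 0" unfolding B_def by simp
    show "norm (D x) \<le> B" for x by (rule nb)
  qed
qed

lemma dir_bound:
  fixes \<phi> :: "'a::euclidean_space \<Rightarrow> 'a" and D :: "'a \<Rightarrow> ('a \<Rightarrow>\<^sub>L 'a)" and E :: "'a set"
  assumes [measurable]: "E \<in> sets borel" and fin: "emeasure lborel E < \<infinity>" and C0: "C \<ge> 0"
    and gE: "\<And>t e. t > 0 \<Longrightarrow> norm e = 1 \<Longrightarrow> gg E (t *\<^sub>R e) \<le> ennreal (C * t)"
    and Dc: "continuous_on UNIV D" and Dd: "\<And>x. (\<phi> has_derivative blinfun_apply (D x)) (at x)"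
    and B: "\<And>x. norm (D x) \<le> B"
    and bd: "\<And>x. norm (\<phi> x) \<le> 1" and b: "b \<in> Basis"
  shows "(LINT x|lborel. indicator E x * (D x b \<bullet> b)) \<le> 2 * C"
proof -
  define t where "t m = inverse (real (Suc m))" for m
  have t0: "t m > 0" for m unfolding t_def by simp
  define \<psi> where "\<psi> y = \<phi> y \<bullet> b" for y
  have \<phi>c: "continuous_on UNIV \<phi>"
    using Dd has_derivative_continuous continuous_at_imp_continuous_on by blast
  have [measurable]: "\<phi> \<in> borel_measurable borel" by (rule borel_measurable_continuous_onI[OF \<phi>c])
  have [measurable]: "\<psi> \<in> borel_measurable borel" unfolding \<psi>_def by measurable
  have \<psi>b: "\<bar>\<psi> y\<bar> \<le> 1" for y unfolding \<psi>_def using Basis_le_norm[OF b, of "\<phi> y"] bd[of y] by linarith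
  have Dm[measurable]: "(\<lambda>x. D x b \<bullet> b) \<in> borel_measurable borel"
    by (rule borel_measurable_continuous_onI[OF continuous_on_blinfun_matrix[OF Dc]])
  define s where "s m x = indicator E x * ((\<psi> (x + t m *\<^sub>R b) - \<psi> x) / t m)" for m x
  have iE: "integrable lborel (\<lambda>x. B * indicator E x :: real)" using fin by auto
  have lip: "norm (\<phi> y - \<phi> x) \<le> B * norm (y - x)" for x y
    by (rule differentiable_bound[of UNIV \<phi> "\<lambda>x. blinfun_apply (D x)"])
       (use Dd B in \<open>auto simp: norm_blinfun.rep_eq[symmetric]\<close>)
  have bound: "norm (s m x) \<le> B * indicator E x" for m x
  proof -
    have "\<bar>\<psi> (x + t m *\<^sub>R b) - \<psi> x\<bar> \<le> norm (\<phi> (x + t m *\<^sub>R b) - \<phi> x)"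
      unfolding \<psi>_def inner_diff_left[symmetric] by (rule Basis_le_norm[OF b])
    also have "\<dots> \<le> B * norm (t m *\<^sub>R b)" using lip[of x "x + t m *\<^sub>R b"] lip[of "x + t m *\<^sub>R b" x] by (simp add: norm_minus_commute)
    also have "\<dots> = B * t m" using b t0[of m] by simp
    finally have "\<bar>(\<psi> (x + t m *\<^sub>R b) - \<psi> x) / t m\<bar> \<le> B" using t0[of m] by (simp add: field_simps)
    then show ?thesis unfolding s_def by (auto simp: indicator_def abs_mult)
  qed
  have lim: "(\<lambda>m. s m x) \<longlonglongrightarrow> indicator E x * (D x b \<bullet> b)" for x
  proof -
    have "((\<lambda>u. x + u *\<^sub>R b) has_derivative (\<lambda>u. u *\<^sub>R b)) (at 0)"
      by (auto intro!: derivative_eq_intros)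
    moreover have "(\<phi> has_derivative blinfun_apply (D x)) (at (x + 0 *\<^sub>R b))" using Dd by simp
    ultimately have "((\<lambda>u. \<phi> (x + u *\<^sub>R b)) has_derivative (\<lambda>u. D x (u *\<^sub>R b))) (at 0)"
      by (rule has_derivative_compose)
    then have "((\<lambda>u. \<phi> (x + u *\<^sub>R b) \<bullet> b) has_derivative (\<lambda>u. D x (u *\<^sub>R b) \<bullet> b)) (at 0)"
      by (rule bounded_linear.has_derivative[OF bounded_linear_inner_left])
    moreover have "(\<lambda>u. D x (u *\<^sub>R b) \<bullet> b) = (*) (D x b \<bullet> b)"
      by (simp add: blinfun.scaleR_right fun_eq_iff mult.commute)
    ultimately have "((\<lambda>u. \<psi> (x + u *\<^sub>R b)) has_field_derivative (D x b \<bullet> b)) (at 0)"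
      unfolding has_field_derivative_def \<psi>_def by simp
    then have L: "((\<lambda>u. (\<psi> (x + u *\<^sub>R b) - \<psi> x) / u) \<longlongrightarrow> D x b \<bullet> b) (at 0)"
      unfolding DERIV_def by simp
    have ft: "filterlim t (at 0) sequentially"
      unfolding filterlim_at
    proof
      show "\<forall>\<^sub>F m in sequentially. t m \<in> UNIV \<and> t m \<noteq> 0"
        using t0 by (intro always_eventually) (metis UNIV_I less_irrefl)
      show "t \<longlonglongrightarrow> 0" unfolding t_def by (rule LIMSEQ_inverse_real_of_nat)
    qed
    have "(\<lambda>m. (\<psi> (x + t m *\<^sub>R b) - \<psi> x) / t m) \<longlonglongrightarrow> D x b \<bullet> b"
      using filterlim_compose[OF L ft] by simp
    then show ?thesis unfolding s_def by (intro tendsto_mult_left)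
  qed
  have conv: "(\<lambda>m. LINT x|lborel. s m x) \<longlonglongrightarrow> (LINT x|lborel. indicator E x * (D x b \<bullet> b))"
  proof (rule integral_dominated_convergence[where w="\<lambda>x. B * indicator E x"])
    show "(\<lambda>x. indicator E x * (D x b \<bullet> b)) \<in> borel_measurable lborel" by measurable
    show "s i \<in> borel_measurable lborel" for i unfolding s_def by measurable
    show "integrable lborel (\<lambda>x. B * indicator E x)" by (rule iE)
    show "AE x in lborel. (\<lambda>i. s i x) \<longlonglongrightarrow> indicator E x * (D x b \<bullet> b)"
      using lim by (intro always_eventually) blast
    show "AE x in lborel. norm (s i x) \<le> B * indicator E x" for i
      using bound by (intro always_eventually) blast
  qed
  have le: "(LINT x|lborel. s m x) \<le> 2 * C" for m
  proof -
    have "(\<lambda>x. s m x) = (\<lambda>x. indicator E x * (\<psi> (x + t m *\<^sub>R b) - \<psi> x) / t m)"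
      unfolding s_def by (simp add: fun_eq_iff)
    then have "(LINT x|lborel. s m x) = (LINT x|lborel. indicator E x * (\<psi> (x + t m *\<^sub>R b) - \<psi> x)) / t m"
      by (simp only: integral_divide_zero)
    also have "\<dots> \<le> (enn2real (gg E (t m *\<^sub>R b)) + enn2real (gg E (- (t m *\<^sub>R b)))) / t m"
      using t0[of m] by (intro divide_right_mono shift_bound) (use fin \<psi>b in auto)
    also have "\<dots> \<le> (C * t m + C * t m) / t m"
    proof -
      have nb: "norm b = 1" "norm (-b) = 1" using b by auto
      have "enn2real (gg E (t m *\<^sub>R b)) \<le> C * t m"
        using gE[OF t0 nb(1)] C0 t0[of m] by (intro enn2real_leI) auto
      moreover have "enn2real (gg E (t m *\<^sub>R (-b))) \<le> C * t m"
        using gE[OF t0 nb(2)] C0 t0[of m] by (intro enn2real_leI) auto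
      ultimately show ?thesis using t0[of m] by (intro divide_right_mono) auto
    qed
    also have "\<dots> = 2 * C" using t0[of m] by (simp add: field_simps)
    finally show ?thesis .
  qed
  show ?thesis by (rule LIMSEQ_le_const2[OF conv]) (use le in auto)
qed

lemma perimeter_finite:
  fixes E :: "'a::euclidean_space set"
  assumes [measurable]: "E \<in> sets borel" and fin: "emeasure lborel E < \<infinity>" and C0: "C \<ge> 0"
    and gE: "\<And>t e. t > 0 \<Longrightarrow> norm e = 1 \<Longrightarrow> gg E (t *\<^sub>R e) \<le> ennreal (C * t)"
  shows "finite_perimeter E"
proof -
  have "perimeter E \<le> ereal (real DIM('a) * (2 * C))"
    unfolding perimeter_def
  proof (rule SUP_least)
    fix \<phi> :: "'a \<Rightarrow> 'a" assume "\<phi> \<in> test_fields"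
    then obtain D :: "'a \<Rightarrow> ('a \<Rightarrow>\<^sub>L 'a)" where Dc: "continuous_on UNIV D"
      and Dd: "\<And>x. (\<phi> has_derivative blinfun_apply (D x)) (at x)"
      and cpt: "compact (closure {x. \<phi> x \<noteq> 0})" and bd: "\<And>x. norm (\<phi> x) \<le> 1"
      unfolding test_fields_def by blast
    obtain B where B0: "B \<ge> 0" and B: "\<And>x. norm (D x) \<le> B"
      using D_bounded[OF Dc Dd cpt] by blast
    have div: "divergence \<phi> x = (\<Sum>b\<in>Basis. D x b \<bullet> b)" for x
      unfolding divergence_def frechet_derivative_at[OF Dd, symmetric] ..
    have Dm[measurable]: "(\<lambda>x. D x b \<bullet> b) \<in> borel_measurable borel" for b
      by (rule borel_measurable_continuous_onI[OF continuous_on_blinfun_matrix[OF Dc]])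
    have iE: "integrable lborel (\<lambda>x. B * indicator E x :: real)" using fin by auto
    have ib: "integrable lborel (\<lambda>x. indicator E x * (D x b \<bullet> b))" if "b \<in> Basis" for b
    proof (rule Bochner_Integration.integrable_bound[OF iE])
      show "(\<lambda>x. indicator E x * (D x b \<bullet> b)) \<in> borel_measurable lborel" by measurable
      show "AE x in lborel. norm (indicator E x * (D x b \<bullet> b)) \<le> norm (B * indicator E x)"
      proof (intro always_eventually allI)
        fix x
        have "\<bar>D x b \<bullet> b\<bar> \<le> norm (D x b)" by (rule Basis_le_norm[OF that])
        also have "\<dots> \<le> norm (D x) * norm b" by (rule norm_blinfun)
        also have "\<dots> = norm (D x)" using that by simp
        also have "\<dots> \<le> B" by (rule B)
        finally show "norm (indicator E x * (D x b \<bullet> b)) \<le> norm (B * indicator E x)"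
          using B0 by (auto simp: indicator_def abs_mult)
      qed
    qed
    have "(LINT x:E|lebesgue. divergence \<phi> x) = (LINT x|lebesgue. indicator E x * (\<Sum>b\<in>Basis. D x b \<bullet> b))"
      unfolding set_lebesgue_integral_def div by simp
    also have "\<dots> = (LINT x|lborel. indicator E x * (\<Sum>b\<in>Basis. D x b \<bullet> b))"
      by (rule integral_completion) measurable
    also have "\<dots> = (LINT x|lborel. (\<Sum>b\<in>Basis. indicator E x * (D x b \<bullet> b)))"
      by (simp add: sum_distrib_left)
    also have "\<dots> = (\<Sum>b\<in>Basis. LINT x|lborel. indicator E x * (D x b \<bullet> b))"
      by (rule Bochner_Integration.integral_sum[where f="\<lambda>b x. indicator E x * (D x b \<bullet> b)"]) (use ib in auto)
    also have "\<dots> \<le> (\<Sum>b\<in>(Basis::'a set). 2 * C)"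
      by (intro sum_mono dir_bound[OF _ fin C0 gE Dc Dd B bd]) auto
    also have "\<dots> = real DIM('a) * (2 * C)" by simp
    finally show "ereal (LINT x:E|lebesgue. divergence \<phi> x) \<le> ereal (real DIM('a) * (2 * C))"
      by simp
  qed
  then show ?thesis unfolding finite_perimeter_def
    using order.strict_trans1 by fastforce
qed

lemma ennreal_div_bound:
  fixes x :: ennreal
  assumes "a > 0" "ennreal a * x \<le> ennreal b"
  shows "x \<le> ennreal (b / a)"
proof -
  have "x = ennreal (1 / a) * (ennreal a * x)"
    using assms(1) by (simp add: mult.assoc[symmetric] ennreal_mult[symmetric])
  also have "\<dots> \<le> ennreal (1 / a) * ennreal b" by (intro mult_left_mono assms(2)) auto
  also have "\<dots> \<le> ennreal (b / a)"
    using assms(1) by (cases "b \<ge> 0") (auto simp: ennreal_mult[symmetric] ennreal_neg)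
  finally show ?thesis .
qed

lemma main_borel:
  fixes r :: "nat \<Rightarrow> real" and Bs :: "nat \<Rightarrow> ('a::euclidean_space) set" and B :: "'a set" and s M :: real
  assumes s: "s \<ge> 1" and rpos: "\<And>n. r n > 0" and r0: "r \<longlonglongrightarrow> 0"
    and [measurable]: "\<And>n. Bs n \<in> sets borel" "B \<in> sets borel"
    and dl: "(\<lambda>n. \<integral>\<^sup>+x. ennreal \<bar>indicator B x - indicator (Bs n) x :: real\<bar> \<partial>lborel) \<longlonglongrightarrow> 0"
    and M0: "M \<ge> 0"
    and J: "eventually (\<lambda>n. Jtilde s (r n) (Bs n) \<le> ennreal (M * sigma_s DIM('a) s (r n))) sequentially"
  shows "\<exists>C\<ge>0. \<forall>t e. t > 0 \<longrightarrow> norm e = 1 \<longrightarrow> gg B (t *\<^sub>R e) \<le> ennreal (C * t)"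
proof -
  obtain K where K0: "K > 0" and KK: "\<And>t. t > 0 \<Longrightarrow> \<exists>r0>0. \<forall>r. 0 < r \<and> r < r0 \<longrightarrow>
     (\<exists>N. (\<forall>j<N. r \<le> 7 * rho t j) \<and> 0 < sigma_s DIM('a) s r \<and> sigma_s DIM('a) s r \<le> K * (\<Sum>j<N. rho t j powr (1 - s)))"
    using scale_choice[OF s, of "DIM('a)"] by blast
  define \<kappa> where "\<kappa> = measure lborel (ball (0::'a) 1)"
  have \<kappa>0: "\<kappa> > 0" unfolding \<kappa>_def using content_ball_pos[of 1 "0::'a"] by simp
  define cst where "cst = 4 * \<kappa> * 7 powr (-(real DIM('a) + s))"
  have cst0: "cst > 0" unfolding cst_def using \<kappa>0 by simp
  define C where "C = M * K / cst"
  have C0: "C \<ge> 0" unfolding C_def using M0 K0 cst0 by simp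
  have "gg B (t *\<^sub>R e) \<le> ennreal (C * t)" if t: "t > 0" and e: "norm e = 1" for t e
  proof -
    obtain \<epsilon> where \<epsilon>: "\<epsilon> > 0" and H: "\<And>r. 0 < r \<Longrightarrow> r < \<epsilon> \<Longrightarrow>
       (\<exists>N. (\<forall>j<N. r \<le> 7 * rho t j) \<and> 0 < sigma_s DIM('a) s r \<and> sigma_s DIM('a) s r \<le> K * (\<Sum>j<N. rho t j powr (1 - s)))"
      using KK[OF t] by blast
    have ev_r: "eventually (\<lambda>n. r n < \<epsilon>) sequentially"
      using order_tendstoD(2)[OF r0 \<epsilon>] .
    have ev: "eventually (\<lambda>n. gg (Bs n) (t *\<^sub>R e) \<le> ennreal (C * t)) sequentially"
      using ev_r J
    proof eventually_elim
      case (elim n)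
      obtain N where N1: "\<forall>j<N. r n \<le> 7 * rho t j" and sp: "0 < sigma_s DIM('a) s (r n)"
        and N2: "sigma_s DIM('a) s (r n) \<le> K * (\<Sum>j<N. rho t j powr (1 - s))"
        using H[OF rpos elim(1)] by blast
      define A where "A = (\<Sum>j<N. rho t j powr (1 - s))"
      have "0 < K * A" using sp N2 unfolding A_def by linarith
      then have A0: "A > 0" using K0 by (simp add: zero_less_mult_iff)
      have sumeq: "(\<Sum>j<N. 4 * measure lborel (ball (0::'a) 1) * 7 powr (-(real DIM('a) + s)) * rho t j powr (1 - s) / t)
          = cst * A / t"
        unfolding A_def cst_def \<kappa>_def by (simp add: sum_distrib_left sum_divide_distrib mult.assoc)
      have "ennreal (cst * A / t) * gg (Bs n) (t *\<^sub>R e) \<le> Jtilde s (r n) (Bs n)"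
        using J_lower[OF _ e t rpos _ , of "Bs n" s N] N1 s unfolding sumeq by auto
      also have "\<dots> \<le> ennreal (M * sigma_s DIM('a) s (r n))" by (rule elim(2))
      also have "\<dots> \<le> ennreal (M * (K * A))"
        using N2 M0 unfolding A_def by (intro ennreal_leI mult_left_mono) auto
      finally have "gg (Bs n) (t *\<^sub>R e) \<le> ennreal (M * (K * A) / (cst * A / t))"
        by (rule ennreal_div_bound[rotated]) (use cst0 A0 t in simp)
      also have "M * (K * A) / (cst * A / t) = C * t" unfolding C_def using A0 cst0 t by (simp add: field_simps)
      finally show ?case .
    qed
    define \<delta> where "\<delta> n = (\<integral>\<^sup>+x. ennreal \<bar>indicator B x - indicator (Bs n) x :: real\<bar> \<partial>lborel)" for n
    have lim: "(\<lambda>n. ennreal (C * t) + (\<delta> n + \<delta> n)) \<longlonglongrightarrow> ennreal (C * t) + (0 + 0)"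
      using dl unfolding \<delta>_def[symmetric] by (intro tendsto_add tendsto_const)
    have "gg B (t *\<^sub>R e) \<le> ennreal (C * t) + (0 + 0)"
    proof (rule LIMSEQ_le_const[OF lim])
      obtain N0 where N0: "\<And>n. n \<ge> N0 \<Longrightarrow> gg (Bs n) (t *\<^sub>R e) \<le> ennreal (C * t)"
        using ev unfolding eventually_sequentially by blast
      show "\<exists>N. \<forall>n\<ge>N. gg B (t *\<^sub>R e) \<le> ennreal (C * t) + (\<delta> n + \<delta> n)"
      proof (intro exI allI impI)
        fix n assume "n \<ge> N0"
        have "gg B (t *\<^sub>R e) \<le> gg (Bs n) (t *\<^sub>R e) + 2 * \<delta> n"
          unfolding \<delta>_def by (rule gg_compare) auto
        also have "\<dots> \<le> ennreal (C * t) + 2 * \<delta> n" using N0[OF \<open>n \<ge> N0\<close>] by (intro add_right_mono)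
        finally show "gg B (t *\<^sub>R e) \<le> ennreal (C * t) + (\<delta> n + \<delta> n)" by (simp add: mult_2)
      qed
    qed
    then show ?thesis by simp
  qed
  then show ?thesis using C0 by blast
qed

lemma borel_rep:
  fixes A :: "'a::euclidean_space set"
  assumes "A \<in> sets lebesgue"
  shows "\<exists>B. B \<in> sets borel \<and> (AE x in lebesgue. (x \<in> A) = (x \<in> B))"
proof -
  obtain S N N' where A: "A = S \<union> N" "N \<subseteq> N'" "N' \<in> null_sets lborel" "S \<in> sets lborel"
    using sets_completionE[OF assms] by metis
  have "AE x in lebesgue. x \<notin> N'" by (rule AE_not_in) (rule null_sets_completionI[OF A(3)])
  then have "AE x in lebesgue. (x \<in> A) = (x \<in> S)" by eventually_elim (use A in auto)
  moreover have "S \<in> sets borel" using A(4) by simp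
  ultimately show ?thesis by blast
qed

lemma Jtilde_cong:
  fixes A B :: "'a::euclidean_space set"
  assumes ae: "AE x in lebesgue. (x \<in> A) = (x \<in> B)"
  shows "Jtilde s r A = Jtilde s r B"
proof -
  have inner: "(\<integral>\<^sup>+ y. ennreal (kernel_k DIM('a) s r (dist x y)) * indicator (UNIV - A) y \<partial>lebesgue)
     = (\<integral>\<^sup>+ y. ennreal (kernel_k DIM('a) s r (dist x y)) * indicator (UNIV - B) y \<partial>lebesgue)" for x
    by (rule nn_integral_cong_AE) (use ae in \<open>eventually_elim, simp add: indicator_def\<close>)
  show ?thesis unfolding Jtilde_def inner
    by (rule nn_integral_cong_AE) (use ae in \<open>eventually_elim, simp add: indicator_def\<close>)
qed

lemma div_meas:
  assumes "\<phi> \<in> test_fields"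
  shows "divergence \<phi> \<in> borel_measurable (borel :: ('a::euclidean_space) measure)"
proof -
  obtain D :: "'a \<Rightarrow> ('a \<Rightarrow>\<^sub>L 'a)" where Dc: "continuous_on UNIV D"
      and Dd: "\<And>x. (\<phi> has_derivative blinfun_apply (D x)) (at x)"
    using assms unfolding test_fields_def by blast
  have div: "divergence \<phi> = (\<lambda>x. \<Sum>b\<in>Basis. D x b \<bullet> b)"
    unfolding divergence_def fun_eq_iff frechet_derivative_at[OF Dd, symmetric] by simp
  have Dm[measurable]: "(\<lambda>x. D x b \<bullet> b) \<in> borel_measurable borel" for b
    by (rule borel_measurable_continuous_onI[OF continuous_on_blinfun_matrix[OF Dc]])
  show ?thesis unfolding div by measurable
qed

lemma perimeter_cong:
  fixes A B :: "'a::euclidean_space set"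
  assumes ae: "AE x in lebesgue. (x \<in> A) = (x \<in> B)" and [measurable]: "A \<in> sets lebesgue" "B \<in> sets lebesgue"
  shows "perimeter A = perimeter B"
  unfolding perimeter_def
proof (intro SUP_cong refl arg_cong[where f=ereal])
  fix \<phi> :: "'a \<Rightarrow> 'a" assume "\<phi> \<in> test_fields"
  then have m: "divergence \<phi> \<in> borel_measurable borel" by (rule div_meas)
  then have [measurable]: "divergence \<phi> \<in> borel_measurable lebesgue"
    by (intro measurable_completion) simp
  show "(LINT x:A|lebesgue. divergence \<phi> x) = (LINT x:B|lebesgue. divergence \<phi> x)"
    unfolding set_lebesgue_integral_def
    by (rule integral_cong_AE) (measurable, use ae in \<open>eventually_elim, simp add: indicator_def\<close>)
qed

theorem proposition2p6:
  fixes r :: "nat \<Rightarrow> real" and Es :: "nat \<Rightarrow> ('a::euclidean_space) set"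
    and E :: "'a set" and s M :: real
  assumes "DIM('a) \<ge> 2" and "s \<ge> 1"
    and "\<And>n. r n > 0" and "r \<longlonglongrightarrow> 0"
    and "\<And>n. Es n \<in> sets lebesgue" and "\<And>n. emeasure lebesgue (Es n) < \<infinity>"
    and "E \<in> sets lebesgue" and "emeasure lebesgue E < \<infinity>"
    and "(\<lambda>n. LINT x|lebesgue. \<bar>indicator (Es n) x - indicator E x :: real\<bar>) \<longlonglongrightarrow> 0"
    and "limsup (\<lambda>n. (enn2ereal (Jtilde s (r n) (Es n))) / ereal (sigma_s DIM('a) s (r n)))
           \<le> ereal M"
  shows "finite_perimeter E"
proof -
  note s = assms(2) and rpos = assms(3) and r0 = assms(4)
  note [measurable] = assms(5) assms(7)
  have "\<forall>n. \<exists>B. B \<in> sets borel \<and> (AE x in lebesgue. (x \<in> Es n) = (x \<in> B))"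
    using borel_rep assms(5) by blast
  then obtain Bs where Bs: "\<And>n. Bs n \<in> sets borel" and aeBs: "\<And>n. AE x in lebesgue. (x \<in> Es n) = (x \<in> Bs n)"
    by metis
  obtain B where B: "B \<in> sets borel" and aeB: "AE x in lebesgue. (x \<in> E) = (x \<in> B)"
    using borel_rep[OF assms(7)] by blast
  note [measurable] = Bs B
  have BsL[measurable]: "Bs n \<in> sets lebesgue" for n using Bs[of n] by simp
  have BL[measurable]: "B \<in> sets lebesgue" using B by simp
  have finBs: "emeasure lborel (Bs n) < \<infinity>" for n
  proof -
    have "emeasure lebesgue (Es n) = emeasure lebesgue (Bs n)" by (rule emeasure_eq_AE[OF aeBs]) auto
    then show ?thesis using assms(6)[of n] Bs[of n] by simp
  qed
  have finB: "emeasure lborel B < \<infinity>"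
  proof -
    have "emeasure lebesgue E = emeasure lebesgue B" by (rule emeasure_eq_AE[OF aeB]) auto
    then show ?thesis using assms(8) B by simp
  qed
  have dleq: "(\<integral>\<^sup>+x. ennreal \<bar>indicator B x - indicator (Bs n) x :: real\<bar> \<partial>lborel)
      = ennreal (LINT x|lebesgue. \<bar>indicator (Es n) x - indicator E x :: real\<bar>)" for n
  proof -
    have "(LINT x|lebesgue. \<bar>indicator (Es n) x - indicator E x :: real\<bar>)
        = (LINT x|lebesgue. \<bar>indicator B x - indicator (Bs n) x :: real\<bar>)"
    proof (rule integral_cong_AE)
      show "(\<lambda>x. \<bar>indicator (Es n) x - indicator E x :: real\<bar>) \<in> borel_measurable lebesgue" by measurable
      show "(\<lambda>x. \<bar>indicator B x - indicator (Bs n) x :: real\<bar>) \<in> borel_measurable lebesgue" by measurable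
      show "AE x in lebesgue. \<bar>indicator (Es n) x - indicator E x :: real\<bar> = \<bar>indicator B x - indicator (Bs n) x :: real\<bar>"
        using aeB aeBs[of n] by eventually_elim (simp add: indicator_def)
    qed
    also have "\<dots> = (LINT x|lborel. \<bar>indicator B x - indicator (Bs n) x :: real\<bar>)"
      by (rule integral_completion) measurable
    finally have eq: "(LINT x|lebesgue. \<bar>indicator (Es n) x - indicator E x :: real\<bar>)
        = (LINT x|lborel. \<bar>indicator B x - indicator (Bs n) x :: real\<bar>)" .
    have int: "integrable lborel (\<lambda>x. \<bar>indicator B x - indicator (Bs n) x :: real\<bar>)"
      using finB finBs[of n] by (intro integrable_abs integrable_diff integrable_real_indicator) auto
    show ?thesis unfolding eq by (rule nn_integral_eq_integral[OF int]) simp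
  qed
  have dl: "(\<lambda>n. \<integral>\<^sup>+x. ennreal \<bar>indicator B x - indicator (Bs n) x :: real\<bar> \<partial>lborel) \<longlonglongrightarrow> 0"
    unfolding dleq using tendsto_ennrealI[OF assms(9)] by simp
  define M' where "M' = max M 0 + 1"
  have M'0: "M' \<ge> 0" unfolding M'_def by simp
  have "limsup (\<lambda>n. (enn2ereal (Jtilde s (r n) (Es n))) / ereal (sigma_s DIM('a) s (r n))) < ereal M'"
    using assms(10) unfolding M'_def by (meson ereal_less_eq(3) le_less_trans less_add_one max.cobounded1 not_le order.strict_trans1)
  then have ev1: "eventually (\<lambda>n. (enn2ereal (Jtilde s (r n) (Es n))) / ereal (sigma_s DIM('a) s (r n)) < ereal M') sequentially"
    by (rule Limsup_lessD)
  obtain K where K0: "K > 0" and KK: "\<And>t. t > 0 \<Longrightarrow> \<exists>r0>0. \<forall>r. 0 < r \<and> r < r0 \<longrightarrow>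
     (\<exists>N. (\<forall>j<N. r \<le> 7 * rho t j) \<and> 0 < sigma_s DIM('a) s r \<and> sigma_s DIM('a) s r \<le> K * (\<Sum>j<N. rho t j powr (1 - s)))"
    using scale_choice[OF s, of "DIM('a)"] by blast
  obtain \<epsilon> where \<epsilon>: "\<epsilon> > 0" and H: "\<And>r. 0 < r \<Longrightarrow> r < \<epsilon> \<Longrightarrow> 0 < sigma_s DIM('a) s r"
    using KK[of 1] by auto
  have ev2: "eventually (\<lambda>n. 0 < sigma_s DIM('a) s (r n)) sequentially"
    using order_tendstoD(2)[OF r0 \<epsilon>] by eventually_elim (use H rpos in auto)
  have J: "eventually (\<lambda>n. Jtilde s (r n) (Bs n) \<le> ennreal (M' * sigma_s DIM('a) s (r n))) sequentially"
    using ev1 ev2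
  proof eventually_elim
    case (elim n)
    let ?\<sigma> = "sigma_s DIM('a) s (r n)"
    have "enn2ereal (Jtilde s (r n) (Es n)) < ereal M' * ereal ?\<sigma>"
      using elim by (subst (asm) ereal_divide_less_iff) auto
    then have "enn2ereal (Jtilde s (r n) (Bs n)) \<le> enn2ereal (ennreal (M' * ?\<sigma>))"
      using Jtilde_cong[OF aeBs[of n], of s "r n"] elim(2) M'0 by simp
    then show ?case by (simp add: less_eq_ennreal.rep_eq)
  qed
  obtain C where C0: "C \<ge> 0" and gC: "\<And>t e. t > 0 \<Longrightarrow> norm e = 1 \<Longrightarrow> gg B (t *\<^sub>R e) \<le> ennreal (C * t)"
    using main_borel[OF s rpos r0 Bs B dl M'0 J] by blast
  have "finite_perimeter B" by (rule perimeter_finite[OF B finB C0 gC])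
  moreover have "perimeter E = perimeter B" by (rule perimeter_cong[OF aeB]) auto
  ultimately show ?thesis unfolding finite_perimeter_def by simp
qed

end
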